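(* Let $G$ be a graph and $n\ge 0$ an integer. Then $\operatorname{col}_{ve}(G)\ge n+4$ if and only if, in the vertex-edge marking game on $G$, Bob has a strategy guaranteeing that, at the start of one of his turns, there is an $n$-free path.
   Context: The vertex-edge marking game on a graph $G=(V,E)$ (finite or infinite) is played by Alice, who marks vertices, and Bob, who marks edges. Initially nothing is marked. The game proceeds in rounds $r=1,2,\dots$; in each round Alice first marks one unmarked vertex, then Bob marks one unmarked edge. For a finite graph the game ends when either player has no move; for an infinite graph it continues forever. After round $r$, the vertex score of $v$ is $0$ if $v$ is marked, and otherwise the number of marked edges incident to $v$. The $r$-round score is the supremum over $v\in V$ of the vertex scores after round $r$, and the final score of the game is the supremum of the $r$-round scores over all rounds. Bob has a winning strategy for score $s$ if, whatever Alice plays, Bob can force the final score to be at least $s$. The vertex-edge coloring number is $\operatorname{col}_{ve}(G)=\sup\{s : \text{Bob has a winning strategy for score } s\}+1$. In a position of the game, an $n$-free path is a path $P$ in $G$ with vertex sequence $v_0,\dots,v_k$, $k\ge 2$, such that: the first and last edges $v_0v_1$ and $v_{k-1}v_k$ are marked; the interior vertices $v_1,\dots,v_{k-1}$ are unmarked; and each interior vertex is incident to at least $n+1$ edges not in $P$, at least $n$ of which are marked. *)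

theory Defs
  imports Main "HOL-Library.Extended_Nat"
begin

definition graph :: "'a set \<Rightarrow> 'a set set \<Rightarrow> bool" where
  "graph V E \<longleftrightarrow> (\<forall>e\<in>E. \<exists>u v. u \<in> V \<and> v \<in> V \<and> u \<noteq> v \<and> e = {u, v})"

text \<open>Bob's (deterministic) strategy: given the list of completed rounds
  (Alice's vertex, Bob's edge) and Alice's current vertex, return an edge.
  Alice's moves are given as a sequence a (a i is her move in round i+1).\<close>
type_synonym 'a bob_strat = "('a \<times> 'a set) list \<Rightarrow> 'a \<Rightarrow> 'a set"

fun hist :: "'a bob_strat \<Rightarrow> (nat \<Rightarrow> 'a) \<Rightarrow> nat \<Rightarrow> ('a \<times> 'a set) list" where
  "hist \<sigma> a 0 = []"
| "hist \<sigma> a (Suc i) = hist \<sigma> a i @ [(a i, \<sigma> (hist \<sigma> a i) (a i))]"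

definition bmove :: "'a bob_strat \<Rightarrow> (nat \<Rightarrow> 'a) \<Rightarrow> nat \<Rightarrow> 'a set" where
  "bmove \<sigma> a i = \<sigma> (hist \<sigma> a i) (a i)"

definition mV :: "(nat \<Rightarrow> 'a) \<Rightarrow> nat \<Rightarrow> 'a set" where
  "mV a i = a ` {..<i}"

definition mE :: "'a bob_strat \<Rightarrow> (nat \<Rightarrow> 'a) \<Rightarrow> nat \<Rightarrow> 'a set set" where
  "mE \<sigma> a i = bmove \<sigma> a ` {..<i}"

text \<open>Rounds 1..i have all been played legally (the game has not ended before).\<close>
definition completed :: "'a set \<Rightarrow> 'a set set \<Rightarrow> 'a bob_strat \<Rightarrow> (nat \<Rightarrow> 'a) \<Rightarrow> nat \<Rightarrow> bool" where
  "completed V E \<sigma> a i \<longleftrightarrow>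
     (\<forall>j<i. a j \<in> V - mV a j \<and> bmove \<sigma> a j \<in> E - mE \<sigma> a j)"

definition alice_legal :: "'a set \<Rightarrow> 'a set set \<Rightarrow> 'a bob_strat \<Rightarrow> (nat \<Rightarrow> 'a) \<Rightarrow> bool" where
  "alice_legal V E \<sigma> a \<longleftrightarrow>
     (\<forall>i. completed V E \<sigma> a i \<and> V - mV a i \<noteq> {} \<longrightarrow> a i \<in> V - mV a i)"

definition bob_strategy :: "'a set \<Rightarrow> 'a set set \<Rightarrow> 'a bob_strat \<Rightarrow> bool" where
  "bob_strategy V E \<sigma> \<longleftrightarrow>
     (\<forall>a i. completed V E \<sigma> a i \<and> a i \<in> V - mV a i \<and> E - mE \<sigma> a i \<noteq> {}
        \<longrightarrow> bmove \<sigma> a i \<in> E - mE \<sigma> a i)"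

definition vertex_score :: "'a set \<Rightarrow> 'a set set \<Rightarrow> 'a \<Rightarrow> nat" where
  "vertex_score MV ME v = (if v \<in> MV then 0 else card {e \<in> ME. v \<in> e})"

definition round_score :: "'a set \<Rightarrow> 'a set \<Rightarrow> 'a set set \<Rightarrow> enat" where
  "round_score V MV ME = Sup ((\<lambda>v. enat (vertex_score MV ME v)) ` V)"

definition final_score :: "'a set \<Rightarrow> 'a set set \<Rightarrow> 'a bob_strat \<Rightarrow> (nat \<Rightarrow> 'a) \<Rightarrow> enat" where
  "final_score V E \<sigma> a =
     Sup {round_score V (mV a i) (mE \<sigma> a i) | i. 1 \<le> i \<and> completed V E \<sigma> a i}"

definition bob_wins :: "'a set \<Rightarrow> 'a set set \<Rightarrow> nat \<Rightarrow> bool" where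
  "bob_wins V E s \<longleftrightarrow>
     (\<exists>\<sigma>. bob_strategy V E \<sigma> \<and> (\<forall>a. alice_legal V E \<sigma> a \<longrightarrow> enat s \<le> final_score V E \<sigma> a))"

definition col_ve :: "'a set \<Rightarrow> 'a set set \<Rightarrow> enat" where
  "col_ve V E = Sup {enat s | s. bob_wins V E s} + 1"

definition at_least :: "nat \<Rightarrow> 'b set \<Rightarrow> bool" where
  "at_least k A \<longleftrightarrow> infinite A \<or> k \<le> card A"

definition path_edges :: "'a list \<Rightarrow> 'a set set" where
  "path_edges vs = {{vs ! i, vs ! Suc i} | i. Suc i < length vs}"

definition n_free_path :: "'a set \<Rightarrow> 'a set set \<Rightarrow> 'a set \<Rightarrow> 'a set set \<Rightarrow> nat \<Rightarrow> 'a list \<Rightarrow> bool" where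
  "n_free_path V E MV ME n vs \<longleftrightarrow>
     (let k = length vs - 1 in
       3 \<le> length vs \<and> distinct vs \<and> set vs \<subseteq> V \<and>
       (\<forall>i<k. {vs ! i, vs ! Suc i} \<in> E) \<and>
       {vs ! 0, vs ! 1} \<in> ME \<and> {vs ! (k - 1), vs ! k} \<in> ME \<and>
       (\<forall>i. 0 < i \<and> i < k \<longrightarrow>
          vs ! i \<notin> MV \<and>
          at_least (n + 1) ({e \<in> E. vs ! i \<in> e} - path_edges vs) \<and>
          at_least n (({e \<in> E. vs ! i \<in> e} - path_edges vs) \<inter> ME)))"

text \<open>At the start of Bob's turn in round i+1 (rounds 1..i completed, Alice has just
  marked a i legally, and Bob has a move) there is an n-free path.\<close>
definition free_path_at_bob_turn ::
  "'a set \<Rightarrow> 'a set set \<Rightarrow> 'a bob_strat \<Rightarrow> (nat \<Rightarrow> 'a) \<Rightarrow> nat \<Rightarrow> nat \<Rightarrow> bool" where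
  "free_path_at_bob_turn V E \<sigma> a n i \<longleftrightarrow>
     completed V E \<sigma> a i \<and> a i \<in> V - mV a i \<and> E - mE \<sigma> a i \<noteq> {} \<and>
     (\<exists>vs. n_free_path V E (insert (a i) (mV a i)) (mE \<sigma> a i) n vs)"

end

theory Submission
  imports Defs
begin

lemma hist_eq: "hist \<sigma> a i = map (\<lambda>j. (a j, bmove \<sigma> a j)) [0..<i]"
  by (induction i) (auto simp: bmove_def)

lemma mV_hist: "fst ` set (hist \<sigma> a i) = mV a i"
  by (simp add: hist_eq mV_def image_image atLeast0LessThan)

lemma mE_hist: "snd ` set (hist \<sigma> a i) = mE \<sigma> a i"
  by (simp add: hist_eq mE_def image_image atLeast0LessThan)

lemma mV_Suc: "mV a (Suc i) = insert (a i) (mV a i)"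
  by (simp add: mV_def lessThan_Suc)

lemma mE_Suc: "mE \<sigma> a (Suc i) = insert (bmove \<sigma> a i) (mE \<sigma> a i)"
  by (simp add: mE_def lessThan_Suc)

lemma mE_0: "mE \<sigma> a 0 = {}"
  by (simp add: mE_def)

lemma finite_mE: "finite (mE \<sigma> a i)"
  by (simp add: mE_def)

lemma completed_Suc: "completed V E \<sigma> a (Suc i) \<longleftrightarrow>
   completed V E \<sigma> a i \<and> a i \<in> V - mV a i \<and> bmove \<sigma> a i \<in> E - mE \<sigma> a i"
  unfolding completed_def by (auto simp: less_Suc_eq)

lemma completed_mono: "completed V E \<sigma> a i \<Longrightarrow> j \<le> i \<Longrightarrow> completed V E \<sigma> a j"
  unfolding completed_def by auto

lemma hist_bmove_eq: "hist \<sigma> a i = hist \<tau> a i \<Longrightarrow> j < i \<Longrightarrow> bmove \<sigma> a j = bmove \<tau> a j"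
proof -
  assume h: "hist \<sigma> a i = hist \<tau> a i" and j: "j < i"
  have "\<forall>x\<in>{0..<i}. bmove \<sigma> a x = bmove \<tau> a x"
    using h by (simp add: hist_eq)
  then show ?thesis using j by simp
qed

lemma hist_mE_eq: "hist \<sigma> a i = hist \<tau> a i \<Longrightarrow> j \<le> i \<Longrightarrow> mE \<sigma> a j = mE \<tau> a j"
proof -
  assume h: "hist \<sigma> a i = hist \<tau> a i" and j: "j \<le> i"
  have "\<And>k. k < j \<Longrightarrow> bmove \<sigma> a k = bmove \<tau> a k"
    using hist_bmove_eq[OF h] j by simp
  then show ?thesis unfolding mE_def by (intro image_cong) auto
qed

lemma hist_completed_eq: "hist \<sigma> a i = hist \<tau> a i \<Longrightarrow> completed V E \<sigma> a i = completed V E \<tau> a i"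
proof -
  assume h: "hist \<sigma> a i = hist \<tau> a i"
  have "\<And>k. k < i \<Longrightarrow> bmove \<sigma> a k = bmove \<tau> a k \<and> mE \<sigma> a k = mE \<tau> a k"
    using hist_bmove_eq[OF h] hist_mE_eq[OF h] by simp
  then show ?thesis unfolding completed_def by auto
qed

lemma at_least_mono: "A \<subseteq> B \<Longrightarrow> at_least k A \<Longrightarrow> at_least k B"
  unfolding at_least_def by (meson card_mono dual_order.trans finite_subset)

lemma enat_Sup_ge: "enat (Suc k) \<le> Sup (X :: enat set) \<Longrightarrow> \<exists>x\<in>X. enat (Suc k) \<le> x"
proof (rule ccontr)
  assume a: "enat (Suc k) \<le> Sup X" and b: "\<not> (\<exists>x\<in>X. enat (Suc k) \<le> x)"
  have "\<forall>x\<in>X. x \<le> enat k"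
  proof
    fix x assume "x \<in> X"
    then have "x < enat (Suc k)" using b by (simp add: not_le)
    then show "x \<le> enat k" by (cases x) auto
  qed
  then have "Sup X \<le> enat k" by (simp add: Sup_least)
  with a have "enat (Suc k) \<le> enat k" by (rule order_trans)
  then show False by simp
qed

lemma fs_ge:
  assumes "completed V E \<sigma> a r" "1 \<le> r" "v \<in> V" "v \<notin> mV a r"
    "k \<le> card {e \<in> mE \<sigma> a r. v \<in> e}"
  shows "enat k \<le> final_score V E \<sigma> a"
proof -
  have "enat k \<le> enat (vertex_score (mV a r) (mE \<sigma> a r) v)"
    using assms by (simp add: vertex_score_def)
  also have "\<dots> \<le> round_score V (mV a r) (mE \<sigma> a r)"
    unfolding round_score_def using assms(3) by (rule SUP_upper)
  also have "\<dots> \<le> final_score V E \<sigma> a"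
    unfolding final_score_def using assms(1,2) by (intro Sup_upper) blast
  finally show ?thesis .
qed


lemma path_edges_take3: "path_edges (take 3 vs) \<subseteq> path_edges vs"
proof
  fix e assume "e \<in> path_edges (take 3 vs)"
  then obtain i where i: "e = {take 3 vs ! i, take 3 vs ! Suc i}" "Suc i < length (take 3 vs)"
    unfolding path_edges_def by auto
  then have "e = {vs ! i, vs ! Suc i}" "Suc i < length vs" by auto
  then show "e \<in> path_edges vs" unfolding path_edges_def
    by (intro CollectI exI[of _ i]) simp
qed

lemma path_edges_drop1: "path_edges (drop 1 vs) \<subseteq> path_edges vs"
proof
  fix e assume "e \<in> path_edges (drop 1 vs)"
  then obtain i where i: "e = {drop 1 vs ! i, drop 1 vs ! Suc i}" "Suc i < length (drop 1 vs)"
    unfolding path_edges_def by auto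
  then have "e = {vs ! Suc i, vs ! Suc (Suc i)}" "Suc (Suc i) < length vs" by auto
  then show "e \<in> path_edges vs" unfolding path_edges_def
    by (intro CollectI exI[of _ "Suc i"]) simp
qed

lemma path_edges_3: "path_edges [x, y, z] = {{x, y}, {y, z}}"
proof -
  have "{{[x, y, z] ! i, [x, y, z] ! Suc i} | i. Suc i < length [x, y, z]} = {{x, y}, {y, z}}"
  proof (intro set_eqI iffI)
    fix e assume "e \<in> {{[x, y, z] ! i, [x, y, z] ! Suc i} | i. Suc i < length [x, y, z]}"
    then obtain i where i: "e = {[x, y, z] ! i, [x, y, z] ! Suc i}" "Suc i < length [x, y, z]"
      by auto
    then have "i = 0 \<or> i = 1" by auto
    then show "e \<in> {{x, y}, {y, z}}" by (elim disjE) (simp_all add: i(1))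
  next
    fix e assume "e \<in> {{x, y}, {y, z}}"
    have 1: "{x, y} \<in> {{[x, y, z] ! i, [x, y, z] ! Suc i} | i. Suc i < length [x, y, z]}"
      by (rule CollectI, rule exI[of _ 0]) simp
    have 2: "{y, z} \<in> {{[x, y, z] ! i, [x, y, z] ! Suc i} | i. Suc i < length [x, y, z]}"
      by (rule CollectI, rule exI[of _ 1]) simp
    show "e \<in> {{[x, y, z] ! i, [x, y, z] ! Suc i} | i. Suc i < length [x, y, z]}"
      using 1 2 \<open>e \<in> {{x, y}, {y, z}}\<close> by blast
  qed
  then show ?thesis unfolding path_edges_def .
qed

lemma nfp_alt: "n_free_path V E MV ME n vs \<longleftrightarrow>
       3 \<le> length vs \<and> distinct vs \<and> set vs \<subseteq> V \<and>
       (\<forall>i<length vs - 1. {vs ! i, vs ! Suc i} \<in> E) \<and>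
       {vs ! 0, vs ! 1} \<in> ME \<and> {vs ! (length vs - 1 - 1), vs ! (length vs - 1)} \<in> ME \<and>
       (\<forall>i. 0 < i \<and> i < length vs - 1 \<longrightarrow>
          vs ! i \<notin> MV \<and>
          at_least (n + 1) ({e \<in> E. vs ! i \<in> e} - path_edges vs) \<and>
          at_least n (({e \<in> E. vs ! i \<in> e} - path_edges vs) \<inter> ME))"
  unfolding n_free_path_def Let_def by (rule refl)


lemma nfp_take3:
  assumes "n_free_path V E MV ME n vs" "4 \<le> length vs" "ME \<subseteq> ME'"
    "{vs ! 1, vs ! 2} \<in> ME'" "vs ! 1 \<notin> MV'"
  shows "n_free_path V E MV' ME' n (take 3 vs)"
proof -
  note A = assms(1)[unfolded nfp_alt]
  let ?t = "take 3 vs"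
  have len: "length ?t = 3" using assms(2) by simp
  have i1: "0 < (1::nat) \<and> 1 < length vs - 1" using assms(2) by simp
  have al1: "at_least (n + 1) ({e \<in> E. vs ! 1 \<in> e} - path_edges vs)" using A i1 by blast
  have al2: "at_least n (({e \<in> E. vs ! 1 \<in> e} - path_edges vs) \<inter> ME)" using A i1 by blast
  have sub: "{e \<in> E. vs ! 1 \<in> e} - path_edges vs \<subseteq> {e \<in> E. vs ! 1 \<in> e} - path_edges ?t"
    using path_edges_take3[of vs] by blast
  have e01: "{vs ! 0, vs ! 1} \<in> ME'" using A assms(3) by blast
  have edges: "\<forall>i<length ?t - 1. {?t ! i, ?t ! Suc i} \<in> E"
  proof (intro allI impI)
    fix i assume "i < length ?t - 1"
    then have "i < 2" using len by simp
    then have "i < length vs - 1" "?t ! i = vs ! i" "?t ! Suc i = vs ! Suc i" using assms(2) by auto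
    then show "{?t ! i, ?t ! Suc i} \<in> E" using A by simp
  qed
  have inter: "\<forall>i. 0 < i \<and> i < length ?t - 1 \<longrightarrow>
          ?t ! i \<notin> MV' \<and>
          at_least (n + 1) ({e \<in> E. ?t ! i \<in> e} - path_edges ?t) \<and>
          at_least n (({e \<in> E. ?t ! i \<in> e} - path_edges ?t) \<inter> ME')"
  proof (intro allI impI)
    fix i assume "0 < i \<and> i < length ?t - 1"
    then have i: "i = 1" using len by simp
    have "at_least (n + 1) ({e \<in> E. vs ! 1 \<in> e} - path_edges ?t)"
      using al1 sub by (rule at_least_mono[rotated])
    moreover have "at_least n (({e \<in> E. vs ! 1 \<in> e} - path_edges ?t) \<inter> ME')"
      using al2 sub assms(3) by (elim at_least_mono[rotated]) blast
    ultimately show "?t ! i \<notin> MV' \<and>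
          at_least (n + 1) ({e \<in> E. ?t ! i \<in> e} - path_edges ?t) \<and>
          at_least n (({e \<in> E. ?t ! i \<in> e} - path_edges ?t) \<inter> ME')"
      using i assms(5) by simp
  qed
  have "set ?t \<subseteq> V" using A set_take_subset[of 3 vs] by blast
  then show ?thesis unfolding nfp_alt
    using len edges inter e01 assms(4) A
    by (simp add: numeral_eq_Suc)
qed

lemma nfp_drop1:
  assumes "n_free_path V E MV ME n vs" "4 \<le> length vs" "ME \<subseteq> ME'"
    "{vs ! 1, vs ! 2} \<in> ME'" "\<And>j. 1 < j \<Longrightarrow> j < length vs - 1 \<Longrightarrow> vs ! j \<notin> MV'"
  shows "n_free_path V E MV' ME' n (drop 1 vs)"
proof -
  note A = assms(1)[unfolded nfp_alt]
  let ?d = "drop 1 vs"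
  have len: "length ?d = length vs - 1" by simp
  have nth: "\<And>j. j < length ?d \<Longrightarrow> ?d ! j = vs ! Suc j" using assms(2) by simp
  have sub: "\<And>v. {e \<in> E. v \<in> e} - path_edges vs \<subseteq> {e \<in> E. v \<in> e} - path_edges ?d"
    using path_edges_drop1[of vs] by blast
  have edges: "\<forall>i<length ?d - 1. {?d ! i, ?d ! Suc i} \<in> E"
  proof (intro allI impI)
    fix i assume i: "i < length ?d - 1"
    then have "Suc i < length vs - 1" "?d ! i = vs ! Suc i" "?d ! Suc i = vs ! Suc (Suc i)"
      using nth len by auto
    then show "{?d ! i, ?d ! Suc i} \<in> E" using A by simp
  qed
  have e0: "{?d ! 0, ?d ! 1} \<in> ME'" using nth[of 0] nth[of 1] assms(2,4) by (simp add: numeral_2_eq_2)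
  have elast: "{?d ! (length ?d - 1 - 1), ?d ! (length ?d - 1)} \<in> ME'"
  proof -
    have "?d ! (length ?d - 1 - 1) = vs ! (length vs - 1 - 1)"
      using nth[of "length ?d - 1 - 1"] assms(2) by (simp add: Suc_diff_Suc)
    moreover have "?d ! (length ?d - 1) = vs ! (length vs - 1)"
    proof -
      have "Suc (length vs - Suc (Suc 0)) = length vs - Suc 0" using assms(2) by arith
      then show ?thesis using nth[of "length ?d - 1"] assms(2) by simp
    qed
    ultimately show ?thesis using A assms(3) by auto
  qed
  have inter: "\<forall>i. 0 < i \<and> i < length ?d - 1 \<longrightarrow>
          ?d ! i \<notin> MV' \<and>
          at_least (n + 1) ({e \<in> E. ?d ! i \<in> e} - path_edges ?d) \<and>
          at_least n (({e \<in> E. ?d ! i \<in> e} - path_edges ?d) \<inter> ME')"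
  proof (intro allI impI)
    fix i assume i: "0 < i \<and> i < length ?d - 1"
    then have j: "0 < Suc i \<and> Suc i < length vs - 1" "1 < Suc i" by auto
    have di: "?d ! i = vs ! Suc i" using i assms(2) by (subst nth_drop) auto
    have al1: "at_least (n + 1) ({e \<in> E. vs ! Suc i \<in> e} - path_edges vs)"
      using A j(1) by blast
    have al2: "at_least n (({e \<in> E. vs ! Suc i \<in> e} - path_edges vs) \<inter> ME)"
      using A j(1) by blast
    have "at_least (n + 1) ({e \<in> E. vs ! Suc i \<in> e} - path_edges ?d)"
      using al1 sub by (rule at_least_mono[rotated])
    moreover have "at_least n (({e \<in> E. vs ! Suc i \<in> e} - path_edges ?d) \<inter> ME')"
      using al2 sub[of "vs ! Suc i"] assms(3) by (elim at_least_mono[rotated]) blast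
    moreover have "vs ! Suc i \<notin> MV'" using assms(5) j by simp
    ultimately show "?d ! i \<notin> MV' \<and>
          at_least (n + 1) ({e \<in> E. ?d ! i \<in> e} - path_edges ?d) \<and>
          at_least n (({e \<in> E. ?d ! i \<in> e} - path_edges ?d) \<inter> ME')"
      using di by simp
  qed
  have "set ?d \<subseteq> V" using A set_drop_subset[of 1 vs] by blast
  moreover have "distinct ?d" using A by simp
  moreover have "3 \<le> length ?d" using assms(2) by simp
  ultimately show ?thesis unfolding nfp_alt using edges e0 elast inter by blast
qed

lemma score3:
  assumes "n_free_path V E MV ME n vs" "length vs = 3" "finite ME'" "ME \<subseteq> ME'"
    "{e \<in> E. vs ! 1 \<in> e} \<subseteq> ME' \<or> (\<exists>e. e \<notin> ME \<and> e \<in> ME' \<and> vs ! 1 \<in> e)"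
  shows "n + 3 \<le> card {e \<in> ME'. vs ! 1 \<in> e}"
proof -
  obtain x y z where vs: "vs = [x, y, z]" using assms(2)
    by (auto simp: numeral_3_eq_3 length_Suc_conv)
  note A = assms(1)[unfolded nfp_alt vs path_edges_3]
  have d: "x \<noteq> y" "x \<noteq> z" "y \<noteq> z" using A by auto
  have xyE: "{x, y} \<in> E" using A by (auto simp: less_Suc_eq)
  have yzE: "{y, z} \<in> E" using A by (auto simp: less_Suc_eq)
  have xyM: "{x, y} \<in> ME" and yzM: "{y, z} \<in> ME" using A by auto
  define Inc where "Inc = {e \<in> E. y \<in> e}"
  define PE where "PE = {{x, y}, {y, z}}"
  have al1: "at_least (n + 1) (Inc - PE)" using A unfolding Inc_def PE_def by auto
  have al2: "at_least n ((Inc - PE) \<inter> ME)" using A unfolding Inc_def PE_def by auto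
  have cPE: "card PE = 2" using d unfolding PE_def by (auto simp: doubleton_eq_iff)
  have PEInc: "PE \<subseteq> Inc" using xyE yzE unfolding PE_def Inc_def by auto
  have PEM: "PE \<subseteq> ME" using xyM yzM unfolding PE_def by auto
  have fT: "finite {e \<in> ME'. y \<in> e}" using assms(3) by simp
  have y1: "vs ! 1 = y" using vs by simp
  from assms(5) show ?thesis unfolding y1
  proof
    assume "{e \<in> E. y \<in> e} \<subseteq> ME'"
    then have IT: "Inc \<subseteq> {e \<in> ME'. y \<in> e}" unfolding Inc_def by auto
    then have fI: "finite Inc" using fT finite_subset by blast
    then have "n + 1 \<le> card (Inc - PE)" using al1 unfolding at_least_def by auto
    moreover have "card (Inc - PE) = card Inc - card PE"
      using fI PEInc by (meson card_Diff_subset finite_subset)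
    moreover have "card PE \<le> card Inc" using fI PEInc by (rule card_mono)
    moreover have "card Inc \<le> card {e \<in> ME'. y \<in> e}" using fT IT by (rule card_mono)
    ultimately show "n + 3 \<le> card {e \<in> ME'. y \<in> e}" using cPE by linarith
  next
    assume "\<exists>e. e \<notin> ME \<and> e \<in> ME' \<and> y \<in> e"
    then obtain e where e: "e \<notin> ME" "e \<in> ME'" "y \<in> e" by blast
    define X where "X = (Inc - PE) \<inter> ME"
    have fX: "finite X" unfolding X_def using assms(3,4) finite_subset by blast
    have cX: "n \<le> card X" using al2 fX unfolding X_def at_least_def by auto
    have fPE: "finite PE" unfolding PE_def by simp
    have "card (insert e (X \<union> PE)) = Suc (card (X \<union> PE))"
      using e(1) PEM fX fPE unfolding X_def by (intro card_insert_disjoint) auto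
    moreover have "card (X \<union> PE) = card X + card PE"
      using fX fPE by (intro card_Un_disjoint) (auto simp: X_def)
    moreover have "insert e (X \<union> PE) \<subseteq> {e \<in> ME'. y \<in> e}"
      using e PEM PEInc assms(4) unfolding X_def Inc_def by auto
    then have "card (insert e (X \<union> PE)) \<le> card {e \<in> ME'. y \<in> e}" using fT by (rule card_mono[rotated])
    ultimately show "n + 3 \<le> card {e \<in> ME'. y \<in> e}" using cX cPE by linarith
  qed
qed


definition minpath :: "'a set \<Rightarrow> 'a set set \<Rightarrow> nat \<Rightarrow> 'a set \<Rightarrow> 'a set set \<Rightarrow> 'a list" where
  "minpath V E n MV ME = (SOME vs. n_free_path V E MV ME n vs \<and>
      (\<forall>ws. n_free_path V E MV ME n ws \<longrightarrow> length vs \<le> length ws))"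

lemma minpath:
  assumes "n_free_path V E MV ME n vs"
  shows "n_free_path V E MV ME n (minpath V E n MV ME) \<and>
    (\<forall>ws. n_free_path V E MV ME n ws \<longrightarrow> length (minpath V E n MV ME) \<le> length ws)"
proof -
  have "\<exists>x. n_free_path V E MV ME n x \<and> (\<forall>y. n_free_path V E MV ME n y \<longrightarrow> length x \<le> length y)"
    using ex_has_least_nat[of "n_free_path V E MV ME n" vs length] assms by blast
  then show ?thesis unfolding minpath_def by (rule someI_ex)
qed

definition pmove :: "'a set \<Rightarrow> 'a set set \<Rightarrow> nat \<Rightarrow> 'a set \<Rightarrow> 'a set set \<Rightarrow> 'a set" where
  "pmove V E n MV ME = (let vs = minpath V E n MV ME in
     if 4 \<le> length vs then {vs ! 1, vs ! 2}
     else if (\<exists>e\<in>E - ME. vs ! 1 \<in> e) then (SOME e. e \<in> E - ME \<and> vs ! 1 \<in> e)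
     else (SOME e. e \<in> E - ME))"

definition legalize :: "'a set set \<Rightarrow> 'a set set \<Rightarrow> 'a set \<Rightarrow> 'a set" where
  "legalize E ME e = (if e \<in> E - ME then e else (SOME e. e \<in> E - ME))"

definition sig :: "'a set \<Rightarrow> 'a set set \<Rightarrow> nat \<Rightarrow> 'a bob_strat \<Rightarrow> 'a bob_strat" where
  "sig V E n \<sigma> h x = (let MV = insert x (fst ` set h); ME = snd ` set h in
     if (\<exists>vs. n_free_path V E MV ME n vs) then pmove V E n MV ME
     else legalize E ME (\<sigma> h x))"

lemma bmove_sig: "bmove (sig V E n \<sigma>) a i =
  (if (\<exists>vs. n_free_path V E (insert (a i) (mV a i)) (mE (sig V E n \<sigma>) a i) n vs)
   then pmove V E n (insert (a i) (mV a i)) (mE (sig V E n \<sigma>) a i)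
   else legalize E (mE (sig V E n \<sigma>) a i) (\<sigma> (hist (sig V E n \<sigma>) a i) (a i)))"
  unfolding bmove_def
  by (subst sig_def) (simp only: Let_def mV_hist mE_hist)

lemma legalize_legal: "E - ME \<noteq> {} \<Longrightarrow> legalize E ME e \<in> E - ME"
proof -
  assume "E - ME \<noteq> {}"
  then have "\<exists>e. e \<in> E - ME" by blast
  then have "(SOME e. e \<in> E - ME) \<in> E - ME" by (rule someI_ex)
  then show ?thesis unfolding legalize_def by simp
qed

lemma nfp_interior:
  assumes "n_free_path V E MV ME n vs" "0 < j" "j < length vs - 1"
  shows "vs ! j \<in> V" "vs ! j \<notin> MV"
proof -
  note A = assms(1)[unfolded nfp_alt]
  have "j < length vs" using assms by simp
  then show "vs ! j \<in> V" using A nth_mem by blast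
  show "vs ! j \<notin> MV" using A assms(2,3) by blast
qed

lemma pmove_long:
  assumes "n_free_path V E MV ME n vs" "4 \<le> length (minpath V E n MV ME)"
  shows "pmove V E n MV ME = {minpath V E n MV ME ! 1, minpath V E n MV ME ! 2}"
    "{minpath V E n MV ME ! 1, minpath V E n MV ME ! 2} \<in> E - ME"
proof -
  let ?w = "minpath V E n MV ME"
  note M = minpath[OF assms(1)]
  show "pmove V E n MV ME = {?w ! 1, ?w ! 2}" unfolding pmove_def Let_def using assms(2) by simp
  have "{?w ! 1, ?w ! Suc 1} \<in> E" using M assms(2) unfolding nfp_alt by auto
  moreover have "{?w ! 1, ?w ! 2} \<notin> ME"
  proof
    assume "{?w ! 1, ?w ! 2} \<in> ME"
    moreover have "?w ! 1 \<notin> MV" using nfp_interior(2)[of V E MV ME n ?w 1] M assms(2) by simp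
    ultimately have "n_free_path V E MV ME n (take 3 ?w)"
      using nfp_take3[of V E MV ME n ?w ME MV] M assms(2) by blast
    then have "length ?w \<le> length (take 3 ?w)" using M by blast
    then show False using assms(2) by simp
  qed
  ultimately show "{?w ! 1, ?w ! 2} \<in> E - ME" by (simp add: numeral_2_eq_2)
qed

lemma pmove_legal:
  assumes "n_free_path V E MV ME n vs" "E - ME \<noteq> {}"
  shows "pmove V E n MV ME \<in> E - ME"
proof (cases "4 \<le> length (minpath V E n MV ME)")
  case True
  then show ?thesis using pmove_long[OF assms(1)] by simp
next
  case False
  show ?thesis
  proof (cases "\<exists>e\<in>E - ME. minpath V E n MV ME ! 1 \<in> e")
    case True
    then have "pmove V E n MV ME = (SOME e. e \<in> E - ME \<and> minpath V E n MV ME ! 1 \<in> e)"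
      using False unfolding pmove_def Let_def by simp
    moreover have "\<exists>e. e \<in> E - ME \<and> minpath V E n MV ME ! 1 \<in> e" using True by blast
    ultimately show ?thesis by (metis (mono_tags, lifting) someI_ex)
  next
    case c2: False
    then have "pmove V E n MV ME = (SOME e. e \<in> E - ME)"
      using False unfolding pmove_def Let_def by simp
    then show ?thesis using assms(2) by (metis all_not_in_conv someI_ex)
  qed
qed

lemma pmove_short:
  assumes "n_free_path V E MV ME n vs" "\<not> 4 \<le> length (minpath V E n MV ME)"
    "\<exists>e\<in>E - ME. minpath V E n MV ME ! 1 \<in> e"
  shows "minpath V E n MV ME ! 1 \<in> pmove V E n MV ME"
proof -
  have "pmove V E n MV ME = (SOME e. e \<in> E - ME \<and> minpath V E n MV ME ! 1 \<in> e)"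
    using assms(2,3) unfolding pmove_def Let_def by simp
  moreover have "\<exists>e. e \<in> E - ME \<and> minpath V E n MV ME ! 1 \<in> e" using assms(3) by blast
  ultimately show ?thesis by (metis (mono_tags, lifting) someI_ex)
qed

lemma sig_strategy: "bob_strategy V E (sig V E n \<sigma>)"
  unfolding bob_strategy_def
proof (intro allI impI)
  fix a i
  assume "completed V E (sig V E n \<sigma>) a i \<and> a i \<in> V - mV a i \<and> E - mE (sig V E n \<sigma>) a i \<noteq> {}"
  then have ne: "E - mE (sig V E n \<sigma>) a i \<noteq> {}" by blast
  show "bmove (sig V E n \<sigma>) a i \<in> E - mE (sig V E n \<sigma>) a i"
    using pmove_legal[OF _ ne] legalize_legal[OF ne] by (auto simp: bmove_sig)
qed


lemma path_wins:
  assumes al: "alice_legal V E (sig V E n \<sigma>) a"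
  shows "completed V E (sig V E n \<sigma>) a i \<Longrightarrow> a i \<in> V - mV a i \<Longrightarrow>
    n_free_path V E (insert (a i) (mV a i)) (mE (sig V E n \<sigma>) a i) n vs \<Longrightarrow>
    enat (n + 3) \<le> final_score V E (sig V E n \<sigma>) a"
proof (induction "length vs" arbitrary: i vs rule: less_induct)
  case less
  let ?S = "sig V E n \<sigma>"
  define MV where "MV = insert (a i) (mV a i)"
  define ME where "ME = mE ?S a i"
  have nfp: "n_free_path V E MV ME n vs" using less.prems(3) unfolding MV_def ME_def .
  have bm: "bmove ?S a i = pmove V E n MV ME"
    using nfp by (subst bmove_sig) (auto simp: MV_def ME_def)
  define ws where "ws = minpath V E n MV ME"
  have ws: "n_free_path V E MV ME n ws" "length ws \<le> length vs"
    using minpath[OF nfp] unfolding ws_def by (auto simp: nfp)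
  have w3: "3 \<le> length ws" using ws(1) unfolding nfp_alt by blast
  have mVS: "mV a (Suc i) = MV" by (simp add: mV_Suc MV_def)
  have mES: "mE ?S a (Suc i) = insert (bmove ?S a i) ME" by (simp add: mE_Suc ME_def)
  show ?case
  proof (cases "4 \<le> length ws")
    case True
    have e: "bmove ?S a i = {ws ! 1, ws ! 2}" "{ws ! 1, ws ! 2} \<in> E - ME"
      using pmove_long[OF nfp] True bm unfolding ws_def by auto
    have c1: "completed V E ?S a (Suc i)"
      using less.prems(1,2) e(1,2) ME_def by (auto simp: completed_Suc)
    have w1: "ws ! 1 \<in> V" "ws ! 1 \<notin> MV"
      using nfp_interior[OF ws(1), of 1] True by auto
    have a1: "a (Suc i) \<in> V - mV a (Suc i)"
      using al[unfolded alice_legal_def] c1 w1 mVS by blast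
    have sub: "ME \<subseteq> mE ?S a (Suc i)" "{ws ! 1, ws ! 2} \<in> mE ?S a (Suc i)"
      using mES e(1) by auto
    show ?thesis
    proof (cases "a (Suc i) = ws ! 1")
      case True
      have "\<And>j. 1 < j \<Longrightarrow> j < length ws - 1 \<Longrightarrow> ws ! j \<notin> insert (a (Suc i)) (mV a (Suc i))"
      proof -
        fix j assume j: "1 < j" "j < length ws - 1"
        have "ws ! j \<notin> MV" using nfp_interior(2)[OF ws(1), of j] j by simp
        moreover have "ws ! j \<noteq> ws ! 1"
          using ws(1) j unfolding nfp_alt by (simp add: nth_eq_iff_index_eq)
        ultimately show "ws ! j \<notin> insert (a (Suc i)) (mV a (Suc i))" using True mVS by simp
      qed
      then have np: "n_free_path V E (insert (a (Suc i)) (mV a (Suc i))) (mE ?S a (Suc i)) n (drop 1 ws)"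
        using nfp_drop1[OF ws(1) \<open>4 \<le> length ws\<close> sub] by blast
      have "length (drop 1 ws) < length vs" using ws(2) True w3 by simp
      then show ?thesis using less.hyps c1 a1 np by blast
    next
      case False
      have "ws ! 1 \<notin> insert (a (Suc i)) (mV a (Suc i))" using False w1 mVS by simp
      then have np: "n_free_path V E (insert (a (Suc i)) (mV a (Suc i))) (mE ?S a (Suc i)) n (take 3 ws)"
        using nfp_take3[OF ws(1) \<open>4 \<le> length ws\<close> sub] by blast
      have "length (take 3 ws) < length vs" using ws(2) \<open>4 \<le> length ws\<close> by simp
      then show ?thesis using less.hyps c1 a1 np by blast
    qed
  next
    case False
    then have l3: "length ws = 3" using w3 by simp
    have w1: "ws ! 1 \<in> V" "ws ! 1 \<notin> MV"
      using nfp_interior[OF ws(1), of 1] l3 by auto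
    show ?thesis
    proof (cases "E - ME = {}")
      case True
      have "{ws ! 0, ws ! 1} \<in> ME" using ws(1) unfolding nfp_alt by blast
      then have "i \<noteq> 0" unfolding ME_def using mE_0[of ?S a] by (metis empty_iff)
      have "n + 3 \<le> card {e \<in> ME. ws ! 1 \<in> e}"
        using score3[OF ws(1) l3, of ME] True finite_mE unfolding ME_def by auto
      moreover have "ws ! 1 \<notin> mV a i" using w1 MV_def by simp
      ultimately show ?thesis
        using fs_ge[of V E ?S a i "ws ! 1" "n + 3"] less.prems(1) w1 \<open>i \<noteq> 0\<close>
        unfolding ME_def by simp
    next
      case ne: False
      have leg: "bmove ?S a i \<in> E - ME" using pmove_legal[OF nfp ne] bm by simp
      have c1: "completed V E ?S a (Suc i)"
        using less.prems(1,2) leg ME_def by (auto simp: completed_Suc)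
      have "{e \<in> E. ws ! 1 \<in> e} \<subseteq> mE ?S a (Suc i) \<or>
          (\<exists>e. e \<notin> ME \<and> e \<in> mE ?S a (Suc i) \<and> ws ! 1 \<in> e)"
      proof (cases "\<exists>e\<in>E - ME. ws ! 1 \<in> e")
        case True
        then have "ws ! 1 \<in> bmove ?S a i"
          using pmove_short[OF nfp] False bm unfolding ws_def by simp
        then show ?thesis using leg mES by blast
      next
        case False
        then show ?thesis using mES by blast
      qed
      then have "n + 3 \<le> card {e \<in> mE ?S a (Suc i). ws ! 1 \<in> e}"
        using score3[OF ws(1) l3, of "mE ?S a (Suc i)"] finite_mE mES by blast
      then show ?thesis
        using fs_ge[of V E ?S a "Suc i" "ws ! 1" "n + 3"] c1 w1 mVS by simp
    qed
  qed
qed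

lemma sig_agree:
  assumes noA: "\<not> (\<exists>i. completed V E (sig V E n \<sigma>) a i \<and> a i \<in> V - mV a i \<and>
      (\<exists>vs. n_free_path V E (insert (a i) (mV a i)) (mE (sig V E n \<sigma>) a i) n vs))"
  shows "completed V E \<sigma> a i \<Longrightarrow> hist \<sigma> a i = hist (sig V E n \<sigma>) a i"
proof (induction i)
  case 0
  then show ?case by simp
next
  case (Suc i)
  let ?S = "sig V E n \<sigma>"
  have c: "completed V E \<sigma> a i" "a i \<in> V - mV a i" "bmove \<sigma> a i \<in> E - mE \<sigma> a i"
    using Suc.prems by (auto simp: completed_Suc)
  have h: "hist \<sigma> a i = hist ?S a i" using Suc.IH c(1) .
  have me: "mE \<sigma> a i = mE ?S a i" using hist_mE_eq[OF h] by simp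
  have cS: "completed V E ?S a i" using hist_completed_eq[OF h] c(1) by simp
  have nP: "\<not> (\<exists>vs. n_free_path V E (insert (a i) (mV a i)) (mE ?S a i) n vs)"
    using noA cS c(2) by blast
  have "bmove ?S a i = legalize E (mE ?S a i) (\<sigma> (hist ?S a i) (a i))"
    by (simp only: bmove_sig[of V E n \<sigma> a i] if_not_P[OF nP])
  also have "\<dots> = legalize E (mE \<sigma> a i) (bmove \<sigma> a i)" using h me by (simp add: bmove_def)
  also have "\<dots> = bmove \<sigma> a i" using c(3) by (simp add: legalize_def)
  finally have "bmove ?S a i = bmove \<sigma> a i" .
  then show ?case using h by (simp add: bmove_def)
qed


lemma bob_wins_mono: "bob_wins V E s \<Longrightarrow> t \<le> s \<Longrightarrow> bob_wins V E t"
  unfolding bob_wins_def by (meson enat_ord_simps(1) order_trans)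

lemma col_iff: "enat (n + 4) \<le> col_ve V E \<longleftrightarrow> bob_wins V E (n + 3)"
proof
  let ?S = "{enat s | s. bob_wins V E s}"
  assume h: "enat (n + 4) \<le> col_ve V E"
  have "enat (n + 3) \<le> Sup ?S"
  proof (cases "Sup ?S")
    case (enat m)
    then have "enat (n + 4) \<le> enat (m + 1)" using h by (simp add: col_ve_def one_enat_def)
    then show ?thesis using enat by simp
  next
    case infinity
    then show ?thesis by simp
  qed
  then have "enat (Suc (n + 2)) \<le> Sup ?S" by (simp add: numeral_eq_Suc)
  then obtain x where "x \<in> ?S" "enat (Suc (n + 2)) \<le> x" using enat_Sup_ge by blast
  then obtain s where "bob_wins V E s" "n + 3 \<le> s" by auto
  then show "bob_wins V E (n + 3)" by (rule bob_wins_mono)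
next
  let ?S = "{enat s | s. bob_wins V E s}"
  assume "bob_wins V E (n + 3)"
  then have "enat (n + 3) \<le> Sup ?S" by (intro Sup_upper) blast
  then have "enat (n + 3) + 1 \<le> Sup ?S + 1" by (rule add_right_mono)
  moreover have "enat (n + 3) + 1 = enat (n + 4)" by (simp add: one_enat_def)
  ultimately show "enat (n + 4) \<le> col_ve V E" unfolding col_ve_def by metis
qed

lemma edge_other:
  assumes "graph V E" "e \<in> E" "v \<in> e"
  obtains u where "u \<in> V" "u \<noteq> v" "e = {u, v}"
proof -
  obtain p q where "p \<in> V" "q \<in> V" "p \<noteq> q" "e = {p, q}" using assms(1,2) unfolding graph_def by blast
  then show ?thesis using that assms(3) by (auto simp: insert_commute)
qed

lemma card_minus2:
  assumes "finite A" "e1 \<in> A" "e2 \<in> A" "e1 \<noteq> e2"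
  shows "card (A - {e1, e2}) = card A - 2"
proof -
  have "card (A - {e1, e2}) = card A - card {e1, e2}" using assms by (intro card_Diff_subset) auto
  then show ?thesis using assms(4) by simp
qed

lemma mE_sub: "completed V E \<sigma> a i \<Longrightarrow> mE \<sigma> a i \<subseteq> E"
  unfolding completed_def mE_def by auto

lemma mV_mono: "i \<le> j \<Longrightarrow> mV a i \<subseteq> mV a j"
  unfolding mV_def by auto

lemma score_to_path:
  assumes g: "graph V E" and c: "completed V E \<sigma> a r" and v: "v \<in> V" "v \<notin> mV a r"
    and k: "n + 3 \<le> card {e \<in> mE \<sigma> a r. v \<in> e}"
  shows "\<exists>i. free_path_at_bob_turn V E \<sigma> a n i"
proof -
  define C where "C j = card {e \<in> mE \<sigma> a j. v \<in> e}" for j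
  define j where "j = (LEAST j. n + 3 \<le> C j)"
  have Cj: "n + 3 \<le> C j" unfolding j_def using k C_def by (metis (mono_tags, lifting) LeastI)
  have jr: "j \<le> r" unfolding j_def using k C_def by (simp add: Least_le)
  have "j \<noteq> 0"
  proof
    assume "j = 0"
    then have "C j = 0" by (simp add: C_def mE_0)
    then show False using Cj by simp
  qed
  then obtain i where ji: "j = Suc i" using not0_implies_Suc by blast
  have Ci: "\<not> n + 3 \<le> C i" unfolding j_def using ji j_def not_less_Least by (metis lessI)
  have cS: "completed V E \<sigma> a (Suc i)" using completed_mono[OF c] jr ji by simp
  then have ci: "completed V E \<sigma> a i" "a i \<in> V - mV a i" "bmove \<sigma> a i \<in> E - mE \<sigma> a i"
    by (auto simp: completed_Suc)
  define M where "M = {e \<in> mE \<sigma> a i. v \<in> e}"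
  define M' where "M' = {e \<in> mE \<sigma> a (Suc i). v \<in> e}"
  have fM: "finite M" "finite M'" unfolding M_def M'_def by (simp_all add: finite_mE)
  have "M' \<subseteq> insert (bmove \<sigma> a i) M" unfolding M_def M'_def by (auto simp: mE_Suc)
  then have "card M' \<le> card (insert (bmove \<sigma> a i) M)" using fM by (intro card_mono) auto
  also have "\<dots> \<le> Suc (card M)" using fM(1) by (simp add: card_insert_if)
  finally have "card M' \<le> Suc (card M)" .
  moreover have "n + 3 \<le> card M'" using Cj ji unfolding C_def M'_def by simp
  moreover have "card M < n + 3" using Ci unfolding C_def M_def by simp
  ultimately have cM: "card M = n + 2" "n + 3 \<le> card M'" by auto
  then have "M \<noteq> {}" by auto
  then obtain e1 where e1: "e1 \<in> M" by blast
  have "card (M - {e1}) = n + 1" using cM fM e1 by simp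
  then have "M - {e1} \<noteq> {}"
  proof (intro notI)
    assume "card (M - {e1}) = n + 1" "M - {e1} = {}"
    then show False by simp
  qed
  then obtain e2 where e2: "e2 \<in> M" "e2 \<noteq> e1" by blast
  have ME: "mE \<sigma> a i \<subseteq> E" "mE \<sigma> a (Suc i) \<subseteq> E" using mE_sub[OF ci(1)] mE_sub[OF cS] by auto
  have e1E: "e1 \<in> E" "v \<in> e1" "e1 \<in> mE \<sigma> a i" using e1 ME unfolding M_def by auto
  have e2E: "e2 \<in> E" "v \<in> e2" "e2 \<in> mE \<sigma> a i" using e2 ME unfolding M_def by auto
  obtain u where u: "u \<in> V" "u \<noteq> v" "e1 = {u, v}" using edge_other[OF g e1E(1,2)] by blast
  obtain w where w0: "w \<in> V" "w \<noteq> v" "e2 = {w, v}" using edge_other[OF g e2E(1,2)] by blast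
  have w: "e2 = {v, w}" using w0 by (simp add: insert_commute)
  have uw: "u \<noteq> w" using u w0 e2 by auto
  have PE: "path_edges [u, v, w] = {e1, e2}" using u w path_edges_3 by simp
  have vMV: "v \<notin> insert (a i) (mV a i)"
    using v(2) mV_mono[of "Suc i" r a] jr ji by (auto simp: mV_Suc)
  have M'sub: "M' \<subseteq> M'" ..
  have "M \<subseteq> M'" unfolding M_def M'_def by (auto simp: mE_Suc)
  then have e12': "e1 \<in> M'" "e2 \<in> M'" using e1 e2 by auto
  have "card (M' - {e1, e2}) \<ge> n + 1" using card_minus2[OF fM(2) e12' e2(2)[symmetric]] cM by simp
  then have al1': "at_least (n + 1) (M' - {e1, e2})" unfolding at_least_def by simp
  have "M' - {e1, e2} \<subseteq> {e \<in> E. v \<in> e} - {e1, e2}" using ME unfolding M'_def by auto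
  then have al1: "at_least (n + 1) ({e \<in> E. v \<in> e} - {e1, e2})" using al1' by (rule at_least_mono)
  have "card (M - {e1, e2}) \<ge> n" using card_minus2[OF fM(1) e1 e2(1) e2(2)[symmetric]] cM by simp
  then have al2': "at_least n (M - {e1, e2})" unfolding at_least_def by simp
  have "M - {e1, e2} \<subseteq> ({e \<in> E. v \<in> e} - {e1, e2}) \<inter> mE \<sigma> a i" using ME unfolding M_def by auto
  then have al2: "at_least n (({e \<in> E. v \<in> e} - {e1, e2}) \<inter> mE \<sigma> a i)" using al2' by (rule at_least_mono)
  have "n_free_path V E (insert (a i) (mV a i)) (mE \<sigma> a i) n [u, v, w]"
    unfolding nfp_alt PE
  proof (intro conjI allI impI)
    show "3 \<le> length [u, v, w]" by simp
    show "distinct [u, v, w]" using u w0 uw by auto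
    show "set [u, v, w] \<subseteq> V" using u w0 v by auto
    fix i' assume "i' < length [u, v, w] - 1"
    then have "i' = 0 \<or> i' = 1" by auto
    then show "{[u, v, w] ! i', [u, v, w] ! Suc i'} \<in> E" using e1E e2E u w by auto
  next
    show "{[u, v, w] ! 0, [u, v, w] ! 1} \<in> mE \<sigma> a i" using e1E u by simp
    show "{[u, v, w] ! (length [u, v, w] - 1 - 1), [u, v, w] ! (length [u, v, w] - 1)} \<in> mE \<sigma> a i"
      using e2E w by simp
  next
    fix i' assume "0 < i' \<and> i' < length [u, v, w] - 1"
    then have i': "i' = 1" by auto
    show "[u, v, w] ! i' \<notin> insert (a i) (mV a i)" using vMV i' by simp
    show "at_least (n + 1) ({e \<in> E. [u, v, w] ! i' \<in> e} - {e1, e2})" using al1 i' by simp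
    show "at_least n (({e \<in> E. [u, v, w] ! i' \<in> e} - {e1, e2}) \<inter> mE \<sigma> a i)" using al2 i' by simp
  qed
  then have "free_path_at_bob_turn V E \<sigma> a n i"
    unfolding free_path_at_bob_turn_def using ci by blast
  then show ?thesis by blast
qed


theorem corollary5p3:
  fixes V :: "'a set" and E :: "'a set set" and n :: nat
  assumes "graph V E"
  shows "enat (n + 4) \<le> col_ve V E \<longleftrightarrow>
    (\<exists>\<sigma>. bob_strategy V E \<sigma> \<and>
       (\<forall>a. alice_legal V E \<sigma> a \<longrightarrow> (\<exists>i. free_path_at_bob_turn V E \<sigma> a n i)))"
proof -
  have "bob_wins V E (n + 3) \<longleftrightarrow>
    (\<exists>\<sigma>. bob_strategy V E \<sigma> \<and>
       (\<forall>a. alice_legal V E \<sigma> a \<longrightarrow> (\<exists>i. free_path_at_bob_turn V E \<sigma> a n i)))"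
  proof
    assume "bob_wins V E (n + 3)"
    then obtain \<sigma> where st: "bob_strategy V E \<sigma>"
      and w: "\<forall>a. alice_legal V E \<sigma> a \<longrightarrow> enat (n + 3) \<le> final_score V E \<sigma> a"
      unfolding bob_wins_def by blast
    have "\<forall>a. alice_legal V E \<sigma> a \<longrightarrow> (\<exists>i. free_path_at_bob_turn V E \<sigma> a n i)"
    proof (intro allI impI)
      fix a assume "alice_legal V E \<sigma> a"
      then have "enat (Suc (n + 2)) \<le> final_score V E \<sigma> a" using w by (simp add: numeral_eq_Suc)
      then obtain x where "x \<in> {round_score V (mV a i) (mE \<sigma> a i) | i. 1 \<le> i \<and> completed V E \<sigma> a i}"
          "enat (Suc (n + 2)) \<le> x"
        unfolding final_score_def using enat_Sup_ge by blast
      then obtain r where r: "completed V E \<sigma> a r"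
          "enat (Suc (n + 2)) \<le> Sup ((\<lambda>v. enat (vertex_score (mV a r) (mE \<sigma> a r) v)) ` V)"
        unfolding round_score_def by blast
      then obtain v where v: "v \<in> V" "enat (Suc (n + 2)) \<le> enat (vertex_score (mV a r) (mE \<sigma> a r) v)"
        using enat_Sup_ge[OF r(2)] by blast
      then have "vertex_score (mV a r) (mE \<sigma> a r) v \<ge> n + 3" by simp
      then have "v \<notin> mV a r" "n + 3 \<le> card {e \<in> mE \<sigma> a r. v \<in> e}"
        unfolding vertex_score_def by (auto split: if_splits)
      then show "\<exists>i. free_path_at_bob_turn V E \<sigma> a n i"
        using score_to_path[OF assms r(1) v(1)] by blast
    qed
    then show "\<exists>\<sigma>. bob_strategy V E \<sigma> \<and>
       (\<forall>a. alice_legal V E \<sigma> a \<longrightarrow> (\<exists>i. free_path_at_bob_turn V E \<sigma> a n i))"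
      using st by blast
  next
    assume "\<exists>\<sigma>. bob_strategy V E \<sigma> \<and>
       (\<forall>a. alice_legal V E \<sigma> a \<longrightarrow> (\<exists>i. free_path_at_bob_turn V E \<sigma> a n i))"
    then obtain \<sigma> where fp: "\<forall>a. alice_legal V E \<sigma> a \<longrightarrow> (\<exists>i. free_path_at_bob_turn V E \<sigma> a n i)"
      by blast
    let ?S = "sig V E n \<sigma>"
    have "\<forall>a. alice_legal V E ?S a \<longrightarrow> enat (n + 3) \<le> final_score V E ?S a"
    proof (intro allI impI)
      fix a assume al: "alice_legal V E ?S a"
      show "enat (n + 3) \<le> final_score V E ?S a"
      proof (cases "\<exists>i. completed V E ?S a i \<and> a i \<in> V - mV a i \<and>
          (\<exists>vs. n_free_path V E (insert (a i) (mV a i)) (mE ?S a i) n vs)")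
        case True
        then show ?thesis using path_wins[OF al] by blast
      next
        case False
        note ag = sig_agree[OF False]
        have "alice_legal V E \<sigma> a"
          unfolding alice_legal_def
        proof (intro allI impI)
          fix i assume h: "completed V E \<sigma> a i \<and> V - mV a i \<noteq> {}"
          then have "completed V E ?S a i" using hist_completed_eq[OF ag] by blast
          then show "a i \<in> V - mV a i" using al h unfolding alice_legal_def by blast
        qed
        then obtain i where "free_path_at_bob_turn V E \<sigma> a n i" using fp by blast
        then have c: "completed V E \<sigma> a i" "a i \<in> V - mV a i"
          "\<exists>vs. n_free_path V E (insert (a i) (mV a i)) (mE \<sigma> a i) n vs"
          unfolding free_path_at_bob_turn_def by blast+
        have h: "hist \<sigma> a i = hist ?S a i" using ag c(1) .
        have "completed V E ?S a i" using hist_completed_eq[OF h] c(1) by blast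
        moreover have "mE \<sigma> a i = mE ?S a i" using hist_mE_eq[OF h] by simp
        ultimately show ?thesis using False c by auto
      qed
    qed
    then show "bob_wins V E (n + 3)" unfolding bob_wins_def using sig_strategy by blast
  qed
  then show ?thesis using col_iff by blast
qed

end
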